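(* Let $f\in\mathcal{V}$ and let $\mathcal{C},\mathcal{D}\subseteq\mathbb{R}^n$ be convex cones such that $f$ is positive definite with respect to $\mathcal{C}$ and $\mathcal{C}^-\cap\operatorname{cl}(\mathcal{D})=\{0\}$. Then $(f|_{\mathcal{C}})^\star\in\mathcal{V}$ and $(f|_{\mathcal{C}})^\star$ is positive definite with respect to $\mathcal{D}$.
   Context: Functions are extended real-valued $f:\mathbb{R}^n\to\mathbb{R}\cup\{\pm\infty\}$; $f$ is convex/closed if its epigraph $\{(x,\alpha)\mid \alpha\ge f(x)\}$ is convex/closed. $f$ is positively homogeneous of degree 2 if $f(\lambda x)=\lambda^2 f(x)$ for all $\lambda\ge0$, $x\in\mathbb{R}^n$; $f$ is positive semi-definite if $f(0)=0$ and $f(x)\ge0$ for all $x$. $\mathcal{V}$ is the set of all extended real-valued functions on $\mathbb{R}^n$ that are closed, convex, positive semi-definite and positively homogeneous of degree 2. A convex cone is a nonempty convex set closed under nonnegative scalar multiplication. For a convex cone $\mathcal{C}$, $f\in\mathcal{V}$ is positive definite with respect to $\mathcal{C}$ if there exist $0<\alpha\le\beta<\infty$ with $\alpha\|x\|^2\le f(x)\le\beta\|x\|^2$ for all $x\in\mathcal{C}$. The restriction is $f|_{\mathcal{C}}(x)=f(x)+\delta(x\mid\mathcal{C})$, where $\delta(x\mid\mathcal{C})=0$ if $x\in\mathcal{C}$ and $+\infty$ otherwise. The convex conjugate is $f^\star(y)=\sup_{x\in\mathbb{R}^n}\{y\cdot x-f(x)\}$. $\mathcal{C}^-=\{y\mid\langle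 x,y\rangle\le0\ \forall x\in\mathcal{C}\}$ is the negative polar cone and $\operatorname{cl}$ denotes closure. *)

theory Defs
  imports "HOL-Analysis.Analysis"
begin

definition epi :: "('a \<Rightarrow> ereal) \<Rightarrow> ('a \<times> real) set" where
  "epi f = {(x, a). f x \<le> ereal a}"

definition convex_fun :: "('a::real_vector \<Rightarrow> ereal) \<Rightarrow> bool" where
  "convex_fun f \<longleftrightarrow> convex (epi f)"

definition closed_fun :: "('a::topological_space \<Rightarrow> ereal) \<Rightarrow> bool" where
  "closed_fun f \<longleftrightarrow> closed (epi f)"

definition pos_homog2 :: "('a::real_vector \<Rightarrow> ereal) \<Rightarrow> bool" where
  "pos_homog2 f \<longleftrightarrow> (\<forall>l::real. \<forall>x. l \<ge> 0 \<longrightarrow> f (l *\<^sub>R x) = ereal (l\<^sup>2) * f x)"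

definition pos_semidef :: "('a::real_vector \<Rightarrow> ereal) \<Rightarrow> bool" where
  "pos_semidef f \<longleftrightarrow> f 0 = 0 \<and> (\<forall>x. f x \<ge> 0)"

definition classV :: "('a::real_normed_vector \<Rightarrow> ereal) set" where
  "classV = {f. closed_fun f \<and> convex_fun f \<and> pos_semidef f \<and> pos_homog2 f}"

definition pos_def_wrt :: "('a::real_normed_vector \<Rightarrow> ereal) \<Rightarrow> 'a set \<Rightarrow> bool" where
  "pos_def_wrt f C \<longleftrightarrow> (\<exists>\<alpha> \<beta>::real. 0 < \<alpha> \<and> \<alpha> \<le> \<beta> \<and>
      (\<forall>x\<in>C. ereal (\<alpha> * (norm x)\<^sup>2) \<le> f x \<and> f x \<le> ereal (\<beta> * (norm x)\<^sup>2)))"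

definition restrict_fun :: "('a \<Rightarrow> ereal) \<Rightarrow> 'a set \<Rightarrow> 'a \<Rightarrow> ereal" where
  "restrict_fun f C x = (if x \<in> C then f x else \<infinity>)"

definition conjugate :: "('a::real_inner \<Rightarrow> ereal) \<Rightarrow> 'a \<Rightarrow> ereal" where
  "conjugate f y = (SUP x. ereal (inner y x) - f x)"

definition neg_polar :: "'a::real_inner set \<Rightarrow> 'a set" where
  "neg_polar C = {y. \<forall>x\<in>C. inner x y \<le> 0}"

end

theory Submission
  imports Defs
begin

lemma key:
  fixes C D :: "'a::euclidean_space set"
  assumes cC: "convex_cone C" and pol: "neg_polar C \<inter> closure D = {0}"
  shows "\<exists>c>0. \<forall>y\<in>closure D \<inter> sphere 0 1. \<exists>x\<in>C. norm x \<le> 1 \<and> c \<le> inner x y"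
proof (rule ccontr)
  assume "\<not> ?thesis"
  then have "\<forall>k::nat. \<exists>y\<in>closure D \<inter> sphere 0 1. \<forall>x\<in>C. norm x \<le> 1 \<longrightarrow> inner x y < inverse (real (Suc k))"
    by (metis inverse_positive_iff_positive not_le of_nat_0_less_iff zero_less_Suc)
  then obtain Y where Y: "\<And>k. Y k \<in> closure D \<inter> sphere 0 1"
    "\<And>k x. x \<in> C \<Longrightarrow> norm x \<le> 1 \<Longrightarrow> inner x (Y k) < inverse (real (Suc k))"
    by metis
  have "compact (closure D \<inter> sphere 0 1)"
    by (simp add: closed_Int_compact)
  then obtain l r where l: "l \<in> closure D \<inter> sphere 0 1" "strict_mono (r :: nat \<Rightarrow> nat)" "(Y \<circ> r) \<longlonglongrightarrow> l"
    using compact_imp_seq_compact seq_compactE Y(1) by metis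
  have unit: "inner x l \<le> 0" if "x \<in> C" "norm x \<le> 1" for x
  proof -
    have "(\<lambda>n. inner x ((Y \<circ> r) n)) \<longlonglongrightarrow> inner x l"
      by (intro tendsto_intros l(3))
    moreover have "((\<lambda>n. inverse (real (Suc n))) \<circ> r) \<longlonglongrightarrow> 0"
      by (rule LIMSEQ_subseq_LIMSEQ[OF LIMSEQ_inverse_real_of_nat l(2)])
    moreover have "\<forall>n. inner x ((Y \<circ> r) n) \<le> ((\<lambda>n. inverse (real (Suc n))) \<circ> r) n"
      using Y(2)[OF that] by (simp add: less_imp_le)
    ultimately show ?thesis by (meson LIMSEQ_le)
  qed
  have "l \<in> neg_polar C"
    unfolding neg_polar_def
  proof safe
    fix x assume x: "x \<in> C"
    show "inner x l \<le> 0"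
    proof (cases "x = 0")
      case False
      have "(1 / norm x) *\<^sub>R x \<in> C" using cC x by (simp add: convex_cone_iff)
      then have "inner ((1 / norm x) *\<^sub>R x) l \<le> 0" by (intro unit) auto
      then show ?thesis using False by (simp add: zero_le_divide_iff divide_le_0_iff)
    qed simp
  qed
  then have "l = 0" using pol l(1) by blast
  then show False using l(1) by simp
qed


theorem theorem1:
  fixes f :: "real^'n \<Rightarrow> ereal" and C D :: "(real^'n) set"
  assumes "f \<in> classV"
    and "convex_cone C" and "convex_cone D"
    and "pos_def_wrt f C"
    and "neg_polar C \<inter> closure D = {0}"
  shows "conjugate (restrict_fun f C) \<in> classV \<and> pos_def_wrt (conjugate (restrict_fun f C)) D"
proof -
  define G where "G = conjugate (restrict_fun f C)"
  define fr where "fr x = real_of_ereal (f x)" for x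
  obtain \<alpha> \<beta> :: real where ab: "0 < \<alpha>" "\<alpha> \<le> \<beta>"
    and bnd: "\<And>x. x \<in> C \<Longrightarrow> ereal (\<alpha> * (norm x)\<^sup>2) \<le> f x \<and> f x \<le> ereal (\<beta> * (norm x)\<^sup>2)"
    using assms(4) unfolding pos_def_wrt_def by blast
  have psd: "f 0 = 0" "\<And>x. f x \<ge> 0" and hom: "\<And>l x. l \<ge> 0 \<Longrightarrow> f (l *\<^sub>R x) = ereal (l\<^sup>2) * f x"
    using assms(1) unfolding classV_def pos_semidef_def pos_homog2_def by auto
  have C0: "0 \<in> C" and Cs: "\<And>x c. x \<in> C \<Longrightarrow> c \<ge> 0 \<Longrightarrow> c *\<^sub>R x \<in> C"
    using assms(2) by (auto simp: convex_cone_iff)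
  have Ds: "\<And>x c. x \<in> D \<Longrightarrow> c \<ge> 0 \<Longrightarrow> c *\<^sub>R x \<in> D"
    using assms(3) by (auto simp: convex_cone_iff)
  have ffin: "f x = ereal (fr x)" if "x \<in> C" for x
    using bnd[OF that] psd(2)[of x] unfolding fr_def
    by (cases "f x") auto
  have frb: "\<alpha> * (norm x)\<^sup>2 \<le> fr x" "fr x \<le> \<beta> * (norm x)\<^sup>2" if "x \<in> C" for x
    using bnd[OF that] ffin[OF that] by auto
  have fr0: "fr 0 = 0" using psd(1) by (simp add: fr_def)
  have Gform: "G y = (SUP x\<in>C. ereal (inner y x - fr x))" for y
  proof -
    have "G y = (SUP x\<in>UNIV. ereal (inner y x) - restrict_fun f C x)"
      unfolding G_def conjugate_def by simp
    also have "\<dots> = (SUP x\<in>C. ereal (inner y x - fr x))"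
    proof (rule antisym)
      show "(SUP x\<in>UNIV. ereal (inner y x) - restrict_fun f C x) \<le> (SUP x\<in>C. ereal (inner y x - fr x))"
      proof (rule SUP_mono)
        fix n assume "n \<in> (UNIV :: (real^'n) set)"
        show "\<exists>m\<in>C. ereal (inner y n) - restrict_fun f C n \<le> ereal (inner y m - fr m)"
        proof (cases "n \<in> C")
          case True then show ?thesis by (intro bexI[of _ n]) (auto simp: restrict_fun_def ffin)
        next
          case False then show ?thesis using C0 by (intro bexI[of _ 0]) (auto simp: restrict_fun_def)
        qed
      qed
      show "(SUP x\<in>C. ereal (inner y x - fr x)) \<le> (SUP x\<in>UNIV. ereal (inner y x) - restrict_fun f C x)"
        by (rule SUP_mono) (auto simp: restrict_fun_def ffin)
    qed
    finally show ?thesis .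
  qed
  have Gle: "G y \<le> ereal a \<longleftrightarrow> (\<forall>x\<in>C. inner y x - fr x \<le> a)" for y a
    unfolding Gform by (simp add: SUP_le_iff)
  have Gge: "ereal (inner y x - fr x) \<le> G y" if "x \<in> C" for x y
    unfolding Gform using that by (rule SUP_upper)
  have G0: "G 0 = 0"
  proof (rule antisym)
    show "G 0 \<le> 0" using Gle[of 0 0] frb(1) ab(1)
      by (auto simp: zero_ereal_def intro!: order.trans[OF _ frb(1)])
    show "0 \<le> G 0" using Gge[OF C0, of 0] fr0 by (simp add: zero_ereal_def)
  qed
  have Gpos: "G y \<ge> 0" for y using Gge[OF C0, of y] fr0 by (simp add: zero_ereal_def)
  have epi: "epi G = (\<Inter>x\<in>C. {p. inner (fst p) x - fr x \<le> snd p})"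
    unfolding epi_def using Gle by auto
  have closedG: "closed_fun G"
    unfolding closed_fun_def epi
    by (intro closed_INT ballI closed_Collect_le continuous_intros)
  have convexG: "convex_fun G"
    unfolding convex_fun_def epi
  proof (intro convex_INT ballI)
    fix x assume "x \<in> C"
    show "convex {p. inner (fst p) x - fr x \<le> snd p}"
      unfolding convex_def
    proof (safe)
      fix a1 s1 a2 s2 and u v :: real
      assume h: "inner (fst (a1, s1)) x - fr x \<le> snd (a1, s1)" "inner (fst (a2, s2)) x - fr x \<le> snd (a2, s2)"
        "0 \<le> u" "0 \<le> v" "u + v = 1"
      have "u * (inner a1 x - fr x) \<le> u * s1" using h by (intro mult_left_mono) auto
      moreover have "v * (inner a2 x - fr x) \<le> v * s2" using h by (intro mult_left_mono) auto
      ultimately have "u * inner a1 x + v * inner a2 x - (u + v) * fr x \<le> u * s1 + v * s2"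
        by (simp add: algebra_simps)
      then show "inner (fst (u *\<^sub>R (a1, s1) + v *\<^sub>R (a2, s2))) x - fr x \<le> snd (u *\<^sub>R (a1, s1) + v *\<^sub>R (a2, s2))"
        using h(5) by (simp add: inner_add_left)
    qed
  qed
  have homG: "pos_homog2 G"
    unfolding pos_homog2_def
  proof (intro allI impI)
    fix l :: real and y assume l: "l \<ge> 0"
    show "G (l *\<^sub>R y) = ereal (l\<^sup>2) * G y"
    proof (cases "l = 0")
      case True then show ?thesis using G0 by (simp add: zero_ereal_def[symmetric])
    next
      case False
      then have lp: "l > 0" using l by simp
      have img: "C = (\<lambda>z. l *\<^sub>R z) ` C"
      proof
        show "C \<subseteq> (\<lambda>z. l *\<^sub>R z) ` C"
        proof
          fix x assume "x \<in> C"
          then have "(1/l) *\<^sub>R x \<in> C" using Cs lp by simp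
          moreover have "x = l *\<^sub>R ((1/l) *\<^sub>R x)" using lp by simp
          ultimately show "x \<in> (\<lambda>z. l *\<^sub>R z) ` C" by blast
        qed
        show "(\<lambda>z. l *\<^sub>R z) ` C \<subseteq> C" using Cs l by auto
      qed
      have frh: "fr (l *\<^sub>R z) = l\<^sup>2 * fr z" if "z \<in> C" for z
        using hom[OF l, of z] ffin[OF that] ffin[OF Cs[OF that l]] by simp
      have "G (l *\<^sub>R y) = (SUP x\<in>(\<lambda>z. l *\<^sub>R z) ` C. ereal (inner (l *\<^sub>R y) x - fr x))"
        unfolding Gform using img by simp
      also have "\<dots> = (SUP z\<in>C. ereal (inner (l *\<^sub>R y) (l *\<^sub>R z) - fr (l *\<^sub>R z)))"
        by (simp add: image_comp)
      also have "\<dots> = (SUP z\<in>C. ereal (l\<^sup>2) * ereal (inner y z - fr z))"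
        by (rule SUP_cong) (auto simp: frh power2_eq_square algebra_simps)
      also have "\<dots> = ereal (l\<^sup>2) * G y"
        unfolding Gform using C0 by (subst Sup_ereal_mult_left') auto
      finally show ?thesis .
    qed
  qed
  have VG: "G \<in> classV"
    unfolding classV_def pos_semidef_def using closedG convexG homG G0 Gpos by auto
  obtain c where c: "c > 0" "\<And>y. y \<in> closure D \<inter> sphere 0 1 \<Longrightarrow> \<exists>x\<in>C. norm x \<le> 1 \<and> c \<le> inner x y"
    using key[OF assms(2) assms(5)] by blast
  define a' where "a' = c\<^sup>2 / (4 * \<beta>)"
  define b' where "b' = max a' (1 / (4 * \<alpha>))"
  have bp: "\<beta> > 0" using ab by simp
  have a'p: "a' > 0" unfolding a'_def using c bp by simp
  have lower: "ereal (a' * (norm y)\<^sup>2) \<le> G y" if "y \<in> D" for y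
  proof (cases "y = 0")
    case True then show ?thesis using G0 by simp
  next
    case False
    define u where "u = (1 / norm y) *\<^sub>R y"
    have "u \<in> D" unfolding u_def using Ds[OF that] by simp
    then have "u \<in> closure D \<inter> sphere 0 1" using False closure_subset unfolding u_def by auto
    then obtain x where x: "x \<in> C" "norm x \<le> 1" "c \<le> inner x u" using c(2) by blast
    have xy: "c * norm y \<le> inner x y"
      using x(3) False unfolding u_def by (simp add: field_simps)
    define t where "t = c * norm y / (2 * \<beta>)"
    have tp: "t \<ge> 0" unfolding t_def using c bp by simp
    have zC: "t *\<^sub>R x \<in> C" using Cs[OF x(1) tp] .
    have "fr (t *\<^sub>R x) \<le> \<beta> * (norm (t *\<^sub>R x))\<^sup>2" using frb(2)[OF zC] .
    also have "\<dots> = \<beta> * t\<^sup>2 * (norm x)\<^sup>2" using tp by (simp add: power_mult_distrib)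
    also have "\<dots> \<le> \<beta> * t\<^sup>2 * 1"
      using x(2) bp by (intro mult_left_mono) (auto simp: power_le_one)
    finally have f1: "fr (t *\<^sub>R x) \<le> \<beta> * t\<^sup>2" by simp
    have i1: "inner y (t *\<^sub>R x) \<ge> t * (c * norm y)"
      using xy tp by (simp add: inner_commute mult_left_mono)
    have "a' * (norm y)\<^sup>2 = t * (c * norm y) - \<beta> * t\<^sup>2"
      unfolding a'_def t_def using bp by (simp add: field_simps power2_eq_square)
    also have "\<dots> \<le> inner y (t *\<^sub>R x) - fr (t *\<^sub>R x)" using f1 i1 by linarith
    finally show ?thesis using Gge[OF zC, of y] by (meson ereal_less_eq(3) order_trans)
  qed
  have upper: "G y \<le> ereal (b' * (norm y)\<^sup>2)" for y
    unfolding Gle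
  proof
    fix x assume x: "x \<in> C"
    have "inner y x \<le> norm y * norm x" by (rule norm_cauchy_schwarz)
    moreover have "\<alpha> * (norm x)\<^sup>2 \<le> fr x" using frb(1)[OF x] .
    moreover have "4 * \<alpha> * (norm y * norm x - \<alpha> * (norm x)\<^sup>2) \<le> (norm y)\<^sup>2"
      using sum_squares_ge_zero[of "norm y - 2 * \<alpha> * norm x" 0]
      by (simp add: power2_eq_square algebra_simps)
    ultimately have "4 * \<alpha> * (inner y x - fr x) \<le> (norm y)\<^sup>2"
      using ab(1) by (smt (verit) mult_left_mono)
    then have "inner y x - fr x \<le> (1 / (4 * \<alpha>)) * (norm y)\<^sup>2"
      using ab(1) by (simp add: field_simps)
    also have "\<dots> \<le> b' * (norm y)\<^sup>2" unfolding b'_def by (intro mult_right_mono) auto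
    finally show "inner y x - fr x \<le> b' * (norm y)\<^sup>2" .
  qed
  have "pos_def_wrt G D"
    unfolding pos_def_wrt_def
    using a'p lower upper by (intro exI[of _ a'] exI[of _ b']) (auto simp: b'_def)
  then show ?thesis using VG unfolding G_def by simp
qed

end
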